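(* Let $\mathbf h,\mathbf g\in\mathbb C^{N}$ be nonzero, $P_t>0$, $\eta>0$, and consider $$\max_{\mathbf f\in\mathbb C^N}\ |\mathbf h^{H}\mathbf f|^2\quad\text{s.t.}\quad \|\mathbf f\|^2\le P_t,\quad |\mathbf g^{H}\mathbf f|^2\ge\eta .$$ An optimal solution has the form $\mathbf f=a\mathbf h+b\mathbf g$ with $a,b\in\mathbb C$, where: Case 1: if $\eta\le \dfrac{P_t|\mathbf g^{H}\mathbf h|^2}{\|\mathbf h\|^2}$, then $|a|=\dfrac{\sqrt{P_t}}{\|\mathbf h\|}$, $b=0$, with the phase of $a$ arbitrary. Case 2: if $\dfrac{P_t|\mathbf g^{H}\mathbf h|^2}{\|\mathbf h\|^2}\le\eta\le P_t\|\mathbf g\|^2$ (and $\mathbf h,\mathbf g$ are linearly independent), then $$|a|=\sqrt{\frac{P_t\|\mathbf g\|^2-\eta}{\|\mathbf h\|^2\|\mathbf g\|^2-|\mathbf h^{H}\mathbf g|^2}},\qquad |b|=\frac{\sqrt\eta}{\|\mathbf g\|^2}-\frac{|\mathbf h^{H}\mathbf g|}{\|\mathbf g\|^2}|a|,$$ with phases satisfying $\angle(a)-\angle(b)=\angle(\mathbf h^{H}\mathbf g)$. Case 3: if $\eta>P_t\|\mathbf g\|^2$, the problem is infeasible. *)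

theory Defs
  imports "HOL-Analysis.Analysis"
begin

text \<open>Vectors in C^N are modelled as complex ^ 'n (N = CARD('n)).
  herm x y is the Hermitian product x^H y = sum_i conj(x_i) y_i.
  norm on complex ^ 'n is the Euclidean (l2) norm.\<close>

definition herm :: "complex ^ 'n \<Rightarrow> complex ^ 'n \<Rightarrow> complex" where
  "herm x y = (\<Sum>i\<in>UNIV. cnj (x $ i) * y $ i)"

definition feasible :: "real \<Rightarrow> real \<Rightarrow> complex ^ 'n \<Rightarrow> complex ^ 'n \<Rightarrow> bool" where
  "feasible Pt \<eta> g f \<longleftrightarrow> norm f ^ 2 \<le> Pt \<and> cmod (herm g f) ^ 2 \<ge> \<eta>"

definition optimal :: "real \<Rightarrow> real \<Rightarrow> complex ^ 'n \<Rightarrow> complex ^ 'n \<Rightarrow> complex ^ 'n \<Rightarrow> bool" where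
  "optimal Pt \<eta> h g f \<longleftrightarrow> feasible Pt \<eta> g f \<and>
     (\<forall>f'. feasible Pt \<eta> g f' \<longrightarrow> cmod (herm h f') ^ 2 \<le> cmod (herm h f) ^ 2)"

end

theory Submission
  imports Defs
begin

lemma herm_add_right: "herm x (y + z) = herm x y + herm x z"
  by (simp add: herm_def distrib_left sum.distrib)
lemma herm_add_left: "herm (x + y) z = herm x z + herm y z"
  by (simp add: herm_def distrib_right sum.distrib)
lemma herm_diff_right: "herm x (y - z) = herm x y - herm x z"
  by (simp add: herm_def right_diff_distrib sum_subtractf)
lemma herm_diff_left: "herm (x - y) z = herm x z - herm y z"
  by (simp add: herm_def left_diff_distrib sum_subtractf)
lemma herm_scale_right: "herm x (c *s y) = c * herm x y"
  by (simp add: herm_def sum_distrib_left algebra_simps)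
lemma herm_scale_left: "herm (c *s x) y = cnj c * herm x y"
  by (simp add: herm_def sum_distrib_left algebra_simps)
lemma herm_swap: "herm y x = cnj (herm x y)"
  by (simp add: herm_def mult.commute)
lemma herm_zero_right[simp]: "herm x 0 = 0"
  by (simp add: herm_def)
lemma inner_herm: "inner x y = Re (herm x y)"
  by (simp add: herm_def inner_vec_def inner_complex_def Re_sum)
lemma herm_self: "herm x x = complex_of_real (norm x ^ 2)"
proof -
  have "Im (herm x x) = 0" by (simp add: herm_def Im_sum)
  moreover have "Re (herm x x) = norm x ^ 2" by (simp add: power2_norm_eq_inner inner_herm)
  ultimately show ?thesis by (simp add: complex_eq_iff)
qed
lemma norm_scale: "norm (c *s x) = cmod c * norm (x::complex^'n)"
proof -
  have "complex_of_real (norm (c *s x) ^ 2) = cnj c * c * complex_of_real (norm x ^ 2)"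
    by (simp only: herm_self[symmetric] herm_scale_left herm_scale_right mult.assoc mult.left_commute)
  also have "cnj c * c = complex_of_real (cmod c ^2)"
    by (metis complex_norm_square mult.commute)
  also have "complex_of_real (cmod c ^2) * complex_of_real (norm x ^ 2) = complex_of_real ((cmod c * norm x)^2)"
    by (simp only: of_real_mult[symmetric] power_mult_distrib)
  finally have "norm (c *s x) ^ 2 = (cmod c * norm x)^2" by (simp only: of_real_eq_iff)
  then show ?thesis by (simp add: power2_eq_iff_nonneg)
qed
lemma herm_cs: "cmod (herm x y) \<le> norm x * norm y"
proof (cases "herm x y = 0")
  case True then show ?thesis by simp
next
  case False
  define u where "u = cnj (herm x y) / cmod (herm x y)"
  have u1: "cmod u = 1" using False by (simp add: u_def norm_divide)
  have "herm x (u *s y) = complex_of_real (cmod (herm x y))"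
    using False by (simp add: herm_scale_right u_def complex_norm_square[symmetric] power2_eq_square mult.commute)
  then have "cmod (herm x y) = inner x (u *s y)" by (simp add: inner_herm)
  also have "\<dots> \<le> norm x * norm (u *s y)" by (rule norm_cauchy_schwarz)
  finally show ?thesis using u1 by (simp add: norm_scale)
qed

lemma polar: "z = complex_of_real (cmod z) * cis (Arg z)"
proof (cases "z = 0")
  case True then show ?thesis by simp
next
  case False
  then have "cis (Arg z) = sgn z" using Arg_correct by auto
  then show ?thesis using False by (simp add: sgn_eq)
qed

lemma Arg_scale_cis: assumes "m > 0" "-pi < t" "t \<le> pi" shows "Arg (complex_of_real m * cis t) = t"
proof (rule cis_Arg_unique)
  show "sgn (complex_of_real m * cis t) = cis t" using assms
    by (simp add: sgn_eq norm_mult)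
qed (use assms in auto)

lemma phase:
  assumes "\<exists>k::int. Arg a - Arg b = Arg z + 2 * pi * of_int k"
  shows "cnj a * b * z = complex_of_real (cmod a * cmod b * cmod z)"
proof -
  obtain k :: int where k: "Arg a - Arg b = Arg z + 2 * pi * of_int k" using assms by blast
  have "cnj a * b * z = complex_of_real (cmod a * cmod b * cmod z) * (cnj (cis (Arg a)) * cis (Arg b) * cis (Arg z))"
    apply (subst (1) polar[of a]) apply (subst (1) polar[of b]) apply (subst (1) polar[of z])
    by (simp add: algebra_simps)
  also have "cnj (cis (Arg a)) * cis (Arg b) * cis (Arg z) = cis (- (2 * pi * of_int k))"
  proof -
    have "- Arg a + Arg b + Arg z = - (2 * pi * of_int k)" using k by linarith
    then show ?thesis by (simp add: cis_cnj cis_mult)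
  qed
  also have "\<dots> = 1"
  proof -
    have "cis (2 * pi * of_int k) = 1" by (rule cis_multiple_2pi) simp
    then show ?thesis by (metis cis_cnj complex_cnj_one)
  qed
  finally show ?thesis by simp
qed

lemma cmod_add_sq: "cmod (x + y) ^ 2 = cmod x ^ 2 + cmod y ^ 2 + 2 * Re (x * cnj y)"
  unfolding cmod_power2 by (simp add: algebra_simps power2_eq_square)

lemma scalar_ineq:
  fixes p p0 q q0 r c :: real
  assumes "0 \<le> p0" "p0 \<le> p" "0 \<le> q" "0 \<le> q0" "0 \<le> r" "0 \<le> c"
    "p^2 + q^2 \<le> p0^2 + q0^2" "r * q0 \<le> c * p0"
  shows "r * p + c * q \<le> r * p0 + c * q0"
proof -
  have qq: "q \<le> q0"
  proof -
    have "q^2 \<le> q0^2" using assms(1,2,7) power_mono[OF assms(2) assms(1), of 2] by linarith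
    then show ?thesis using assms(3,4) by (simp add: power2_le_iff_abs_le)
  qed
  show ?thesis
  proof (cases "p = p0")
    case True then show ?thesis using qq assms(6) by (simp add: mult_left_mono)
  next
    case False
    then have pp: "p + p0 > 0" using assms(1,2) by linarith
    have e1: "r * (p - p0) * (p + p0) \<le> r * (q0 - q) * (q0 + q)"
    proof -
      have "(p - p0) * (p + p0) \<le> (q0 - q) * (q0 + q)" using assms(7) by (simp add: algebra_simps power2_eq_square)
      then show ?thesis using assms(5) by (metis mult.assoc mult_left_mono)
    qed
    have e2: "r * (q0 + q) \<le> c * (p + p0)"
    proof -
      have "r * q \<le> r * q0" using qq assms(5) by (simp add: mult_left_mono)
      moreover have "c * p0 \<le> c * p" using assms(2,6) by (simp add: mult_left_mono)
      ultimately show ?thesis using assms(8) by (simp add: algebra_simps)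
    qed
    have "r * (q0 - q) * (q0 + q) \<le> c * (q0 - q) * (p + p0)"
    proof -
      have "(q0 - q) * (r * (q0 + q)) \<le> (q0 - q) * (c * (p + p0))"
        using e2 qq by (simp add: mult_left_mono)
      then show ?thesis by (simp add: algebra_simps)
    qed
    with e1 have "r * (p - p0) * (p + p0) \<le> c * (q0 - q) * (p + p0)" by linarith
    then have "r * (p - p0) \<le> c * (q0 - q)" using pp by (simp add: mult_le_cancel_right)
    then show ?thesis by (simp add: algebra_simps)
  qed
qed


lemma cnj_mult_self: "cnj s * s = complex_of_real (cmod s ^ 2)"
  by (metis complex_norm_square mult.commute)

lemma ub2:
  fixes h g f :: "complex^'n" and P \<eta> :: real
  assumes g0: "g \<noteq> 0" and fP: "norm f^2 \<le> P" and fe: "\<eta> \<le> cmod (herm g f)^2" and e0: "0 < \<eta>"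
   and cond: "P * cmod (herm h g)^2 \<le> \<eta> * norm h^2" and eP: "\<eta> \<le> P * norm g^2"
  shows "norm g^2 * cmod (herm h f) \<le> cmod (herm h g) * sqrt \<eta>
           + sqrt ((norm h^2 * norm g^2 - cmod (herm h g)^2) * (P * norm g^2 - \<eta>))"
proof -
  define G where "G = norm g^2"
  define H where "H = norm h^2"
  define \<rho> where "\<rho> = herm h g"
  define s where "s = herm g f"
  define w where "w = f - (s / of_real G) *s g"
  define hp where "hp = h - (cnj \<rho> / of_real G) *s g"
  have G0: "G > 0" using g0 by (simp add: G_def)
  have hgg: "herm g g = of_real G" by (simp add: G_def herm_self)
  have hhh: "herm h h = of_real H" by (simp add: H_def herm_self)
  have hgh: "herm g h = cnj \<rho>" by (simp add: \<rho>_def herm_swap[of g h])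
  have gw: "herm g w = 0" using G0 by (simp add: w_def herm_diff_right herm_scale_right hgg s_def)
  have wg: "herm w g = 0" using gw herm_swap[of w g] by simp
  have f_eq: "f = w + (s / of_real G) *s g" by (simp add: w_def)
  have nf: "norm f^2 = norm w^2 + cmod s^2 / G"
  proof -
    have "complex_of_real (norm f^2) = herm f f" by (simp add: herm_self)
    also have "\<dots> = herm w w + cnj (s / of_real G) * (s / of_real G) * herm g g"
      by (subst (1 2) f_eq) (simp add: herm_add_left herm_add_right herm_scale_left herm_scale_right gw wg mult.assoc)
    also have "\<dots> = herm w w + (cnj s * s) / of_real G"
      using G0 by (simp add: hgg field_simps power2_eq_square)
    also have "\<dots> = complex_of_real (norm w^2 + cmod s^2 / G)"
      by (simp only: herm_self cnj_mult_self of_real_add of_real_divide)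
    finally show ?thesis by (simp only: of_real_eq_iff)
  qed
  have hf: "herm h f = herm hp w + (s / of_real G) * \<rho>"
    by (subst f_eq) (simp add: hp_def herm_add_right herm_scale_right herm_diff_left herm_scale_left gw \<rho>_def)
  have nhp: "norm hp^2 * G = H * G - cmod \<rho>^2"
  proof -
    have "complex_of_real (norm hp^2) = herm hp hp" by (simp add: herm_self)
    also have "\<dots> = of_real H - cnj \<rho> * \<rho> / of_real G"
      using G0 by (simp add: hp_def herm_diff_left herm_diff_right herm_scale_left herm_scale_right
          hgg hhh hgh \<rho>_def[symmetric] field_simps)
    also have "\<dots> = complex_of_real (H - cmod \<rho>^2 / G)"
      by (simp only: cnj_mult_self of_real_diff of_real_divide)
    finally have "norm hp^2 = H - cmod \<rho>^2 / G" by (simp only: of_real_eq_iff)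
    then show ?thesis using G0 by (simp add: field_simps)
  qed
  have b1: "cmod (herm h f) \<le> norm hp * norm w + cmod s * cmod \<rho> / G"
  proof -
    have "cmod (herm h f) \<le> cmod (herm hp w) + cmod ((s / of_real G) * \<rho>)"
      unfolding hf by (rule norm_triangle_ineq)
    also have "cmod ((s / of_real G) * \<rho>) = cmod s * cmod \<rho> / G"
      using G0 by (simp add: norm_mult norm_divide)
    finally show ?thesis using herm_cs[of hp w] by linarith
  qed
  have D: "sqrt (H * G - cmod \<rho>^2) = norm hp * sqrt G"
    by (simp add: nhp[symmetric] real_sqrt_mult)
  have sc: "cmod \<rho> * cmod s + norm hp * sqrt G * (norm w * sqrt G)
      \<le> cmod \<rho> * sqrt \<eta> + norm hp * sqrt G * sqrt (P * G - \<eta>)"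
  proof (rule scalar_ineq)
    show "sqrt \<eta> \<le> cmod s"
      using real_sqrt_le_mono[OF fe] by (simp add: s_def)
    show "(cmod s)\<^sup>2 + (norm w * sqrt G)\<^sup>2 \<le> (sqrt \<eta>)\<^sup>2 + (sqrt (P * G - \<eta>))\<^sup>2"
    proof -
      have "norm w^2 + cmod s^2 / G \<le> P" using nf fP by simp
      then have "G * norm w^2 + cmod s^2 \<le> P * G" using G0 by (simp add: field_simps)
      moreover have "P * G - \<eta> \<ge> 0" using eP by (simp add: G_def)
      ultimately show ?thesis using G0 e0 by (simp add: power_mult_distrib mult.commute)
    qed
    show "cmod \<rho> * sqrt (P * G - \<eta>) \<le> norm hp * sqrt G * sqrt \<eta>"
    proof -
      have "cmod \<rho>^2 * (P * G - \<eta>) \<le> (H * G - cmod \<rho>^2) * \<eta>"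
      proof -
        have "G * (P * cmod \<rho>^2) \<le> G * (\<eta> * H)" using cond G0 by (simp add: \<rho>_def H_def)
        then show ?thesis by (simp add: algebra_simps)
      qed
      then have "sqrt (cmod \<rho>^2 * (P * G - \<eta>)) \<le> sqrt ((H * G - cmod \<rho>^2) * \<eta>)"
        by (rule real_sqrt_le_mono)
      then show ?thesis by (simp add: real_sqrt_mult D)
    qed
  qed (use e0 G0 eP in \<open>auto simp: G_def\<close>)
  have "G * cmod (herm h f) \<le> cmod \<rho> * cmod s + norm hp * sqrt G * (norm w * sqrt G)"
  proof -
    have "G * cmod (herm h f) \<le> G * (norm hp * norm w + cmod s * cmod \<rho> / G)"
      using b1 G0 by (simp add: mult_left_mono)
    also have "\<dots> = cmod \<rho> * cmod s + norm hp * sqrt G * (norm w * sqrt G)"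
      using G0 by (simp add: field_simps)
    finally show ?thesis .
  qed
  also note sc
  also have "cmod \<rho> * sqrt \<eta> + norm hp * sqrt G * sqrt (P * G - \<eta>)
      = cmod \<rho> * sqrt \<eta> + sqrt ((H * G - cmod \<rho>^2) * (P * G - \<eta>))"
    by (simp add: D real_sqrt_mult)
  finally show ?thesis by (simp add: G_def H_def \<rho>_def mult.commute)
qed


lemma sq_eq_nonneg: "(x::real) ^ 2 = y ^ 2 \<Longrightarrow> 0 \<le> x \<Longrightarrow> 0 \<le> y \<Longrightarrow> x = y"
  by (simp add: power2_eq_iff_nonneg)

lemma case2_vals:
  fixes h g :: "complex^'n"
  assumes Z: "cnj a * b * herm h g = complex_of_real (cmod a * cmod b * cmod (herm h g))"
  shows "cmod (herm g (a *s h + b *s g)) = cmod a * cmod (herm h g) + cmod b * norm g^2"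
    and "cmod (herm h (a *s h + b *s g)) = cmod a * norm h^2 + cmod b * cmod (herm h g)"
    and "norm (a *s h + b *s g)^2 = cmod a^2 * norm h^2 + 2 * cmod a * cmod b * cmod (herm h g) + cmod b^2 * norm g^2"
proof -
  define \<rho> where "\<rho> = herm h g"
  have hgh: "herm g h = cnj \<rho>" by (simp add: \<rho>_def herm_swap[of g h])
  have Zc: "a * cnj b * cnj \<rho> = complex_of_real (cmod a * cmod b * cmod \<rho>)"
  proof -
    have "cnj (cnj a * b * \<rho>) = complex_of_real (cmod a * cmod b * cmod \<rho>)" using Z by (simp add: \<rho>_def)
    then show ?thesis by simp
  qed
  have Z': "cnj a * b * \<rho> = complex_of_real (cmod a * cmod b * cmod \<rho>)" using Z by (simp add: \<rho>_def)
  have e1: "herm g (a *s h + b *s g) = a * cnj \<rho> + b * of_real (norm g^2)"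
    by (simp add: herm_add_right herm_scale_right hgh herm_self)
  have "cmod (a * cnj \<rho> + b * of_real (norm g^2))^2 = (cmod a * cmod \<rho> + cmod b * norm g^2)^2"
  proof -
    have "a * cnj \<rho> * cnj (b * of_real (norm g^2)) = of_real (norm g^2) * (a * cnj b * cnj \<rho>)"
      by (simp add: ac_simps)
    then have re: "Re (a * cnj \<rho> * cnj (b * of_real (norm g^2))) = norm g^2 * (cmod a * cmod b * cmod \<rho>)"
      by (simp only: Zc) (simp del: of_real_power)
    have cx: "cmod (a * cnj \<rho>) = cmod a * cmod \<rho>" by (simp add: norm_mult)
    have cy: "cmod (b * of_real (norm g^2)) = cmod b * norm g^2" by (simp add: norm_mult del: of_real_power)
    show ?thesis by (simp only: cmod_add_sq cx cy re) (simp add: power2_eq_square algebra_simps)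
  qed
  then show "cmod (herm g (a *s h + b *s g)) = cmod a * cmod (herm h g) + cmod b * norm g^2"
    unfolding e1 \<rho>_def[symmetric] by (rule sq_eq_nonneg) auto
  have e2: "herm h (a *s h + b *s g) = a * of_real (norm h^2) + b * \<rho>"
    by (simp add: herm_add_right herm_scale_right \<rho>_def herm_self)
  have "cmod (a * of_real (norm h^2) + b * \<rho>)^2 = (cmod a * norm h^2 + cmod b * cmod \<rho>)^2"
  proof -
    have "a * of_real (norm h^2) * cnj (b * \<rho>) = of_real (norm h^2) * (a * cnj b * cnj \<rho>)"
      by (simp add: ac_simps)
    then have re: "Re (a * of_real (norm h^2) * cnj (b * \<rho>)) = norm h^2 * (cmod a * cmod b * cmod \<rho>)"
      by (simp only: Zc) (simp del: of_real_power)
    have cx: "cmod (a * of_real (norm h^2)) = cmod a * norm h^2" by (simp add: norm_mult del: of_real_power)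
    have cy: "cmod (b * \<rho>) = cmod b * cmod \<rho>" by (simp add: norm_mult)
    show ?thesis by (simp only: cmod_add_sq cx cy re) (simp add: power2_eq_square algebra_simps)
  qed
  then show "cmod (herm h (a *s h + b *s g)) = cmod a * norm h^2 + cmod b * cmod (herm h g)"
    unfolding e2 \<rho>_def[symmetric] by (rule sq_eq_nonneg) auto
  have "complex_of_real (norm (a *s h + b *s g)^2) = herm (a *s h + b *s g) (a *s h + b *s g)"
    by (simp add: herm_self)
  also have "\<dots> = cnj a * a * herm h h + cnj a * b * \<rho> + a * cnj b * cnj \<rho> + cnj b * b * herm g g"
    by (simp add: herm_add_left herm_add_right herm_scale_left herm_scale_right hgh \<rho>_def[symmetric] algebra_simps)
  also have "\<dots> = complex_of_real (cmod a^2 * norm h^2 + 2 * cmod a * cmod b * cmod \<rho> + cmod b^2 * norm g^2)"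
    by (simp only: Z' Zc cnj_mult_self herm_self of_real_add of_real_mult) (simp add: algebra_simps)
  finally show "norm (a *s h + b *s g)^2 = cmod a^2 * norm h^2 + 2 * cmod a * cmod b * cmod (herm h g) + cmod b^2 * norm g^2"
    by (simp only: of_real_eq_iff \<rho>_def)
qed


lemma D_pos:
  fixes h g :: "complex^'n"
  assumes g0: "g \<noteq> 0" and ind: "\<forall>c d::complex. c *s h + d *s g = 0 \<longrightarrow> c = 0 \<and> d = 0"
  shows "norm h^2 * norm g^2 - cmod (herm h g)^2 > 0"
proof -
  define G where "G = norm g^2"
  define H where "H = norm h^2"
  define \<rho> where "\<rho> = herm h g"
  define hp where "hp = h - (cnj \<rho> / of_real G) *s g"
  have G0: "G > 0" using g0 by (simp add: G_def)
  have hgg: "herm g g = of_real G" by (simp add: G_def herm_self)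
  have hhh: "herm h h = of_real H" by (simp add: H_def herm_self)
  have hgh: "herm g h = cnj \<rho>" by (simp add: \<rho>_def herm_swap[of g h])
  have nhp: "norm hp^2 * G = H * G - cmod \<rho>^2"
  proof -
    have "complex_of_real (norm hp^2) = herm hp hp" by (simp add: herm_self)
    also have "\<dots> = of_real H - cnj \<rho> * \<rho> / of_real G"
      using G0 by (simp add: hp_def herm_diff_left herm_diff_right herm_scale_left herm_scale_right
          hgg hhh hgh \<rho>_def[symmetric] field_simps)
    also have "\<dots> = complex_of_real (H - cmod \<rho>^2 / G)"
      by (simp only: cnj_mult_self of_real_diff of_real_divide)
    finally have "norm hp^2 = H - cmod \<rho>^2 / G" by (simp only: of_real_eq_iff)
    then show ?thesis using G0 by (simp add: field_simps)
  qed
  have "hp \<noteq> 0"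
  proof
    assume "hp = 0"
    then have e: "1 *s h + (- (cnj \<rho> / of_real G)) *s g = 0"
      by (simp add: hp_def vec_eq_iff)
    show False using ind[rule_format, OF e] by simp
  qed
  then have "norm hp^2 * G > 0" using G0 by simp
  then show ?thesis using nhp by (simp add: G_def H_def \<rho>_def mult.commute)
qed

theorem proposition2:
  fixes h g :: "complex ^ 'n" and Pt \<eta> :: real
  assumes "h \<noteq> 0" and "g \<noteq> 0" and "Pt > 0" and "\<eta> > 0"
  shows
    "(\<eta> \<le> Pt * cmod (herm g h) ^ 2 / norm h ^ 2 \<longrightarrow>
       (\<exists>a b::complex. cmod a = sqrt Pt / norm h \<and> b = 0) \<and>
       (\<forall>a b::complex. cmod a = sqrt Pt / norm h \<and> b = 0 \<longrightarrow>
          optimal Pt \<eta> h g (a *s h + b *s g))) \<and>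
    (Pt * cmod (herm g h) ^ 2 / norm h ^ 2 \<le> \<eta> \<and> \<eta> \<le> Pt * norm g ^ 2 \<and>
     (\<forall>c d::complex. c *s h + d *s g = 0 \<longrightarrow> c = 0 \<and> d = 0) \<longrightarrow>
       (\<exists>a b::complex.
          cmod a = sqrt ((Pt * norm g ^ 2 - \<eta>) /
                          (norm h ^ 2 * norm g ^ 2 - cmod (herm h g) ^ 2)) \<and>
          cmod b = sqrt \<eta> / norm g ^ 2 - cmod (herm h g) / norm g ^ 2 * cmod a \<and>
          (\<exists>k::int. Arg a - Arg b = Arg (herm h g) + 2 * pi * of_int k)) \<and>
       (\<forall>a b::complex.
          cmod a = sqrt ((Pt * norm g ^ 2 - \<eta>) /
                          (norm h ^ 2 * norm g ^ 2 - cmod (herm h g) ^ 2)) \<and>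
          cmod b = sqrt \<eta> / norm g ^ 2 - cmod (herm h g) / norm g ^ 2 * cmod a \<and>
          (\<exists>k::int. Arg a - Arg b = Arg (herm h g) + 2 * pi * of_int k) \<longrightarrow>
            optimal Pt \<eta> h g (a *s h + b *s g))) \<and>
    (\<eta> > Pt * norm g ^ 2 \<longrightarrow> \<not> (\<exists>f. feasible Pt \<eta> g f))"
proof -
  note h0 = assms(1) and g0 = assms(2) and P0 = assms(3) and e0 = assms(4)
  define G where "G = norm g^2"
  define H where "H = norm h^2"
  define \<rho> where "\<rho> = herm h g"
  have G0: "G > 0" using g0 by (simp add: G_def)
  have H0: "H > 0" using h0 by (simp add: H_def)
  have crho: "cmod (herm g h) = cmod \<rho>" by (simp add: \<rho>_def herm_swap[of g h])
  have ubH: "cmod (herm h f) ^ 2 \<le> Pt * H" if "feasible Pt \<eta> g f" for f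
  proof -
    have "cmod (herm h f) \<le> norm h * norm f" by (rule herm_cs)
    then have "cmod (herm h f)^2 \<le> (norm h * norm f)^2" by (simp add: power_mono)
    also have "\<dots> = H * norm f^2" by (simp add: H_def power_mult_distrib)
    also have "\<dots> \<le> H * Pt" using that H0 by (simp add: feasible_def)
    finally show ?thesis by (simp add: mult.commute)
  qed
  have part1: "(\<eta> \<le> Pt * cmod (herm g h) ^ 2 / norm h ^ 2 \<longrightarrow>
       (\<exists>a b::complex. cmod a = sqrt Pt / norm h \<and> b = 0) \<and>
       (\<forall>a b::complex. cmod a = sqrt Pt / norm h \<and> b = 0 \<longrightarrow>
          optimal Pt \<eta> h g (a *s h + b *s g)))"
  proof (intro impI conjI allI)
    assume c1: "\<eta> \<le> Pt * cmod (herm g h) ^ 2 / norm h ^ 2"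
    show "\<exists>a b::complex. cmod a = sqrt Pt / norm h \<and> b = 0"
      by (rule exI[of _ "complex_of_real (sqrt Pt / norm h)"]) (use P0 in \<open>simp add: norm_divide\<close>)
    fix a b :: complex
    assume ab: "cmod a = sqrt Pt / norm h \<and> b = 0"
    then have f: "a *s h + b *s g = a *s h" by (simp add: vec_eq_iff)
    have nf: "norm (a *s h) ^ 2 = Pt" using ab h0 P0 by (simp add: norm_scale power_mult_distrib)
    have hf: "cmod (herm h (a *s h)) ^ 2 = Pt * H"
      using ab h0 P0 by (simp add: herm_scale_right herm_self norm_mult power_mult_distrib H_def power2_eq_square)
    have gf: "cmod (herm g (a *s h)) ^ 2 = Pt * cmod (herm g h) ^ 2 / norm h ^ 2"
      using ab h0 P0 by (simp add: herm_scale_right norm_mult power_mult_distrib power_divide)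
    show "optimal Pt \<eta> h g (a *s h + b *s g)"
      unfolding optimal_def f using nf hf gf c1 ubH by (simp add: feasible_def)
  qed
  have part3: "\<eta> > Pt * norm g ^ 2 \<longrightarrow> \<not> (\<exists>f. feasible Pt \<eta> g f)"
  proof (intro impI notI)
    assume c3: "\<eta> > Pt * norm g ^ 2" and "\<exists>f. feasible Pt \<eta> g f"
    then obtain f where f: "feasible Pt \<eta> g f" by blast
    have "cmod (herm g f) \<le> norm g * norm f" by (rule herm_cs)
    then have "cmod (herm g f)^2 \<le> (norm g * norm f)^2" by (simp add: power_mono)
    also have "\<dots> = norm g^2 * norm f^2" by (simp add: power_mult_distrib)
    also have "\<dots> \<le> norm g^2 * Pt" using f by (simp add: feasible_def mult_left_mono)
    finally show False using f c3 by (simp add: feasible_def mult.commute)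
  qed
  have part2: "(Pt * cmod (herm g h) ^ 2 / norm h ^ 2 \<le> \<eta> \<and> \<eta> \<le> Pt * norm g ^ 2 \<and>
     (\<forall>c d::complex. c *s h + d *s g = 0 \<longrightarrow> c = 0 \<and> d = 0) \<longrightarrow>
       (\<exists>a b::complex.
          cmod a = sqrt ((Pt * norm g ^ 2 - \<eta>) /
                          (norm h ^ 2 * norm g ^ 2 - cmod (herm h g) ^ 2)) \<and>
          cmod b = sqrt \<eta> / norm g ^ 2 - cmod (herm h g) / norm g ^ 2 * cmod a \<and>
          (\<exists>k::int. Arg a - Arg b = Arg (herm h g) + 2 * pi * of_int k)) \<and>
       (\<forall>a b::complex.
          cmod a = sqrt ((Pt * norm g ^ 2 - \<eta>) /
                          (norm h ^ 2 * norm g ^ 2 - cmod (herm h g) ^ 2)) \<and>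
          cmod b = sqrt \<eta> / norm g ^ 2 - cmod (herm h g) / norm g ^ 2 * cmod a \<and>
          (\<exists>k::int. Arg a - Arg b = Arg (herm h g) + 2 * pi * of_int k) \<longrightarrow>
            optimal Pt \<eta> h g (a *s h + b *s g)))"
  proof (intro impI)
    assume c2: "Pt * cmod (herm g h) ^ 2 / norm h ^ 2 \<le> \<eta> \<and> \<eta> \<le> Pt * norm g ^ 2 \<and>
     (\<forall>c d::complex. c *s h + d *s g = 0 \<longrightarrow> c = 0 \<and> d = 0)"
    then have c2a: "Pt * cmod (herm g h) ^ 2 / norm h ^ 2 \<le> \<eta>" and eP: "\<eta> \<le> Pt * norm g ^ 2"
      and ind: "\<forall>c d::complex. c *s h + d *s g = 0 \<longrightarrow> c = 0 \<and> d = 0" by auto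
    define r where "r = cmod \<rho>"
    define D where "D = H * G - r^2"
    have r0: "r \<ge> 0" by (simp add: r_def)
    have D0: "D > 0" using D_pos[OF g0 ind] by (simp add: D_def H_def G_def r_def \<rho>_def)
    have cond: "Pt * r^2 \<le> \<eta> * H" using c2a H0 crho by (simp add: H_def r_def pos_divide_le_eq)
    have X0: "Pt * G - \<eta> \<ge> 0" using eP by (simp add: G_def)
    define ma where "ma = sqrt ((Pt * G - \<eta>) / D)"
    define mb where "mb = sqrt \<eta> / G - r / G * ma"
    have ma0: "ma \<ge> 0" using X0 D0 by (simp add: ma_def)
    have ma2: "ma^2 = (Pt * G - \<eta>) / D" using X0 D0 by (simp add: ma_def)
    have maD: "ma * D = sqrt (D * (Pt * G - \<eta>))"
    proof (rule sq_eq_nonneg)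
      have m: "ma^2 * D = Pt * G - \<eta>" using ma2 D0 by simp
      have "(ma * D)^2 = (ma^2 * D) * D" by (simp add: power2_eq_square)
      then show "(ma * D)^2 = (sqrt (D * (Pt * G - \<eta>)))^2"
        using m D0 X0 by (simp add: mult.commute)
    qed (use ma0 D0 X0 in auto)
    have rma: "r * ma \<le> sqrt \<eta>"
    proof -
      have "r^2 * (Pt * G - \<eta>) \<le> \<eta> * D"
      proof -
        have "G * (Pt * r^2) \<le> G * (\<eta> * H)" using cond G0 by simp
        then show ?thesis by (simp add: D_def algebra_simps)
      qed
      then have "r^2 * ma^2 \<le> \<eta>" using ma2 D0 by (simp add: pos_divide_le_eq mult.commute)
      then have "sqrt ((r * ma)^2) \<le> sqrt \<eta>" by (simp add: power_mult_distrib real_sqrt_le_mono)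
      then show ?thesis using r0 ma0 by simp
    qed
    have mbv: "mb * G = sqrt \<eta> - r * ma" using G0 by (simp add: mb_def field_simps)
    have mb0: "mb \<ge> 0"
    proof -
      have "mb * G \<ge> 0" using mbv rma by simp
      then show ?thesis using G0 by (simp add: zero_le_mult_iff)
    qed
    have ma_eq: "sqrt ((Pt * norm g ^ 2 - \<eta>) / (norm h ^ 2 * norm g ^ 2 - cmod \<rho> ^ 2)) = ma"
      by (simp add: ma_def D_def G_def H_def r_def \<rho>_def)
    have mb_eq: "sqrt \<eta> / norm g ^ 2 - cmod (herm h g) / norm g ^ 2 * ma = mb"
      by (simp add: mb_def G_def r_def \<rho>_def)
    show "(\<exists>a b::complex.
          cmod a = sqrt ((Pt * norm g ^ 2 - \<eta>) /
                          (norm h ^ 2 * norm g ^ 2 - cmod (herm h g) ^ 2)) \<and>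
          cmod b = sqrt \<eta> / norm g ^ 2 - cmod (herm h g) / norm g ^ 2 * cmod a \<and>
          (\<exists>k::int. Arg a - Arg b = Arg (herm h g) + 2 * pi * of_int k)) \<and>
       (\<forall>a b::complex.
          cmod a = sqrt ((Pt * norm g ^ 2 - \<eta>) /
                          (norm h ^ 2 * norm g ^ 2 - cmod (herm h g) ^ 2)) \<and>
          cmod b = sqrt \<eta> / norm g ^ 2 - cmod (herm h g) / norm g ^ 2 * cmod a \<and>
          (\<exists>k::int. Arg a - Arg b = Arg (herm h g) + 2 * pi * of_int k) \<longrightarrow>
            optimal Pt \<eta> h g (a *s h + b *s g))"
      unfolding ma_eq \<rho>_def[symmetric]
    proof (intro conjI allI impI)
      have Ab: "- pi < Arg \<rho> \<and> Arg \<rho> \<le> pi" by (rule Arg_bounded)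
      show "\<exists>a b::complex. cmod a = ma \<and>
          cmod b = sqrt \<eta> / norm g ^ 2 - cmod \<rho> / norm g ^ 2 * cmod a \<and>
          (\<exists>k::int. Arg a - Arg b = Arg \<rho> + 2 * pi * of_int k)"
      proof (cases "ma = 0")
        case False
        then have mapos: "ma > 0" using ma0 by simp
        define a where "a = complex_of_real ma * cis (Arg \<rho>)"
        define b where "b = complex_of_real mb"
        have ca: "cmod a = ma" using ma0 by (simp add: a_def norm_mult)
        have cb: "cmod b = mb" using mb0 by (simp add: b_def)
        have Aa: "Arg a = Arg \<rho>" unfolding a_def by (rule Arg_scale_cis[OF mapos]) (use Ab in auto)
        have Ab': "Arg b = 0" using mb0 by (simp add: b_def)
        show ?thesis
          by (rule exI[of _ a], rule exI[of _ b])
            (use ca cb Aa Ab' mb_eq in \<open>auto simp: \<rho>_def r_def intro!: exI[of _ 0]\<close>)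
      next
        case True
        have mbpos: "mb > 0" using True e0 G0 by (simp add: mb_def)
        define t where "t = (if Arg \<rho> = pi then pi else - Arg \<rho>)"
        define b where "b = complex_of_real mb * cis t"
        have cb: "cmod b = mb" using mb0 by (simp add: b_def norm_mult)
        have Abt: "Arg b = t" unfolding b_def by (rule Arg_scale_cis[OF mbpos]) (use Ab in \<open>auto simp: t_def\<close>)
        have k: "\<exists>k::int. Arg (0::complex) - Arg b = Arg \<rho> + 2 * pi * of_int k"
        proof (cases "Arg \<rho> = pi")
          case True
          then show ?thesis by (intro exI[of _ "-1"]) (simp add: Abt t_def Arg_zero)
        next
          case False
          then show ?thesis by (intro exI[of _ 0]) (simp add: Abt t_def Arg_zero)
        qed
        show ?thesis
          by (rule exI[of _ 0], rule exI[of _ b]) (use True cb k mb_eq in \<open>auto simp: \<rho>_def r_def\<close>)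
      qed
    next
      fix a b :: complex
      assume ab: "cmod a = ma \<and>
          cmod b = sqrt \<eta> / norm g ^ 2 - cmod \<rho> / norm g ^ 2 * cmod a \<and>
          (\<exists>k::int. Arg a - Arg b = Arg \<rho> + 2 * pi * of_int k)"
      then have ca: "cmod a = ma" and cb: "cmod b = mb"
        and ph: "\<exists>k::int. Arg a - Arg b = Arg \<rho> + 2 * pi * of_int k"
        using mb_eq by (auto simp: \<rho>_def)
      have Z: "cnj a * b * herm h g = complex_of_real (cmod a * cmod b * cmod (herm h g))"
        using phase[OF ph] by (simp add: \<rho>_def)
      note V = case2_vals[OF Z]
      have Vg: "cmod (herm g (a *s h + b *s g)) = ma * r + mb * G"
        using V(1) ca cb by (simp add: r_def \<rho>_def G_def)
      have Vh: "cmod (herm h (a *s h + b *s g)) = ma * H + mb * r"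
        using V(2) ca cb by (simp add: r_def \<rho>_def H_def)
      have Vn: "norm (a *s h + b *s g)^2 = ma^2 * H + 2 * ma * mb * r + mb^2 * G"
        using V(3) ca cb by (simp add: r_def \<rho>_def H_def G_def)
      have alg: "G * (ma^2 * H + 2 * ma * mb * r + mb^2 * G) = ma^2 * D + (sqrt \<eta>)^2"
        using mbv unfolding D_def by algebra
      have nf: "norm (a *s h + b *s g)^2 = Pt"
      proof -
        have m: "ma^2 * D = Pt * G - \<eta>" using ma2 D0 by simp
        have "G * norm (a *s h + b *s g)^2 = ma^2 * D + (sqrt \<eta>)^2"
          using alg by (simp only: Vn)
        also have "\<dots> = G * Pt" using m e0 by (simp add: mult.commute)
        finally have "G * norm (a *s h + b *s g)^2 = G * Pt" .
        then show ?thesis using G0 by simp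
      qed
      have gf: "cmod (herm g (a *s h + b *s g))^2 = \<eta>"
        using Vg mbv e0 by (simp add: algebra_simps)
      have hfG: "G * cmod (herm h (a *s h + b *s g)) = r * sqrt \<eta> + sqrt (D * (Pt * G - \<eta>))"
      proof -
        have "G * (ma * H + mb * r) = ma * D + r * r * ma + r * (mb * G)"
          by (simp add: D_def algebra_simps power2_eq_square)
        also have "\<dots> = ma * D + r * (r * ma + mb * G)" by (simp add: algebra_simps)
        also have "\<dots> = ma * D + r * sqrt \<eta>" using mbv by simp
        finally show ?thesis using maD Vh by simp
      qed
      show "optimal Pt \<eta> h g (a *s h + b *s g)"
        unfolding optimal_def
      proof (intro conjI allI impI)
        show "feasible Pt \<eta> g (a *s h + b *s g)" using nf gf by (simp add: feasible_def)
        fix f' assume f': "feasible Pt \<eta> g f'"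
        have "G * cmod (herm h f') \<le> r * sqrt \<eta> + sqrt (D * (Pt * G - \<eta>))"
          using ub2[OF g0 _ _ e0, of f' Pt h] f' cond eP
          by (simp add: feasible_def r_def \<rho>_def H_def G_def D_def)
        then have "cmod (herm h f') \<le> cmod (herm h (a *s h + b *s g))"
          using hfG G0 by (metis mult_le_cancel_left_pos)
        then show "cmod (herm h f')^2 \<le> cmod (herm h (a *s h + b *s g))^2"
          by (simp add: power_mono)
      qed
    qed
  qed
  show ?thesis using part1 part2 part3 by blast
qed

end
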